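(* Let $T$ be a near-truss and $P$ a non-empty normal sub-heap of $T$. Then $P$ is a paragon if and only if $P$ is left-closed and all equivalence classes of the sub-heap relation $\sim_P$ are right-closed. In particular, if $T$ is a skew truss, then $P$ is a paragon if and only if $P$ is a closed normal sub-heap.
   Context: A heap is a set with a ternary operation $[-,-,-]$ satisfying $[a_1,a_2,[a_3,a_4,a_5]]=[[a_1,a_2,a_3],a_4,a_5]$ and $[a,a,b]=b=[b,a,a]$. A normal sub-heap is a non-empty subset $S$ closed under $[-,-,-]$ with $[[a,e,s],a,e]\in S$ for all $a$ and $e,s\in S$; $a\sim_S b$ iff $[a,b,s]\in S$ for some (equivalently all) $s\in S$. A pre-truss is a heap with an associative multiplication; a near-truss satisfies $a[b,c,d]=[ab,ac,ad]$; a skew truss is a near-truss also satisfying $[b,c,d]a=[ba,ca,da]$. A sub-heap $S$ is left-closed if $[ts',ts,s]\in S$ for all $s,s'\in S$, $t\in T$, right-closed if $[s't,st,s]\in S$, closed if both. A paragon is a non-empty normal sub-heap $P$ such that every equivalence class of $\sim_P$ is a closed sub-heap. *)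

theory Defs
  imports Main
begin

(* A heap (and truss) is modelled on the whole type 'a: h is the ternary
   heap operation [-,-,-], m the multiplication. *)

definition heap :: "('a \<Rightarrow> 'a \<Rightarrow> 'a \<Rightarrow> 'a) \<Rightarrow> bool" where
  "heap h \<longleftrightarrow>
     (\<forall>a1 a2 a3 a4 a5. h a1 a2 (h a3 a4 a5) = h (h a1 a2 a3) a4 a5) \<and>
     (\<forall>a b. h a a b = b \<and> h b a a = b)"

definition pre_truss :: "('a \<Rightarrow> 'a \<Rightarrow> 'a \<Rightarrow> 'a) \<Rightarrow> ('a \<Rightarrow> 'a \<Rightarrow> 'a) \<Rightarrow> bool" where
  "pre_truss h m \<longleftrightarrow> heap h \<and> (\<forall>a b c. m (m a b) c = m a (m b c))"

definition near_truss :: "('a \<Rightarrow> 'a \<Rightarrow> 'a \<Rightarrow> 'a) \<Rightarrow> ('a \<Rightarrow> 'a \<Rightarrow> 'a) \<Rightarrow> bool" where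
  "near_truss h m \<longleftrightarrow> pre_truss h m \<and>
     (\<forall>a b c d. m a (h b c d) = h (m a b) (m a c) (m a d))"

definition skew_truss :: "('a \<Rightarrow> 'a \<Rightarrow> 'a \<Rightarrow> 'a) \<Rightarrow> ('a \<Rightarrow> 'a \<Rightarrow> 'a) \<Rightarrow> bool" where
  "skew_truss h m \<longleftrightarrow> near_truss h m \<and>
     (\<forall>a b c d. m (h b c d) a = h (m b a) (m c a) (m d a))"

definition sub_heap :: "('a \<Rightarrow> 'a \<Rightarrow> 'a \<Rightarrow> 'a) \<Rightarrow> 'a set \<Rightarrow> bool" where
  "sub_heap h S \<longleftrightarrow> (\<forall>a\<in>S. \<forall>b\<in>S. \<forall>c\<in>S. h a b c \<in> S)"

definition normal_sub_heap :: "('a \<Rightarrow> 'a \<Rightarrow> 'a \<Rightarrow> 'a) \<Rightarrow> 'a set \<Rightarrow> bool" where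
  "normal_sub_heap h S \<longleftrightarrow> S \<noteq> {} \<and> sub_heap h S \<and>
     (\<forall>a. \<forall>e\<in>S. \<forall>s\<in>S. h (h a e s) a e \<in> S)"

definition sim :: "('a \<Rightarrow> 'a \<Rightarrow> 'a \<Rightarrow> 'a) \<Rightarrow> 'a set \<Rightarrow> 'a \<Rightarrow> 'a \<Rightarrow> bool" where
  "sim h S a b \<longleftrightarrow> (\<exists>s\<in>S. h a b s \<in> S)"

definition left_closed :: "('a \<Rightarrow> 'a \<Rightarrow> 'a \<Rightarrow> 'a) \<Rightarrow> ('a \<Rightarrow> 'a \<Rightarrow> 'a) \<Rightarrow> 'a set \<Rightarrow> bool" where
  "left_closed h m S \<longleftrightarrow> (\<forall>s\<in>S. \<forall>s'\<in>S. \<forall>t. h (m t s') (m t s) s \<in> S)"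

definition right_closed :: "('a \<Rightarrow> 'a \<Rightarrow> 'a \<Rightarrow> 'a) \<Rightarrow> ('a \<Rightarrow> 'a \<Rightarrow> 'a) \<Rightarrow> 'a set \<Rightarrow> bool" where
  "right_closed h m S \<longleftrightarrow> (\<forall>s\<in>S. \<forall>s'\<in>S. \<forall>t. h (m s' t) (m s t) s \<in> S)"

definition closed_sub :: "('a \<Rightarrow> 'a \<Rightarrow> 'a \<Rightarrow> 'a) \<Rightarrow> ('a \<Rightarrow> 'a \<Rightarrow> 'a) \<Rightarrow> 'a set \<Rightarrow> bool" where
  "closed_sub h m S \<longleftrightarrow> left_closed h m S \<and> right_closed h m S"

definition sim_class :: "('a \<Rightarrow> 'a \<Rightarrow> 'a \<Rightarrow> 'a) \<Rightarrow> 'a set \<Rightarrow> 'a \<Rightarrow> 'a set" where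
  "sim_class h P a = {b. sim h P a b}"

definition paragon :: "('a \<Rightarrow> 'a \<Rightarrow> 'a \<Rightarrow> 'a) \<Rightarrow> ('a \<Rightarrow> 'a \<Rightarrow> 'a) \<Rightarrow> 'a set \<Rightarrow> bool" where
  "paragon h m P \<longleftrightarrow> normal_sub_heap h P \<and>
     (\<forall>a. sub_heap h (sim_class h P a) \<and> closed_sub h m (sim_class h P a))"

end

theory Submission
  imports Defs
begin

context
  fixes h :: "'a \<Rightarrow> 'a \<Rightarrow> 'a \<Rightarrow> 'a" and P :: "'a set" and e :: 'a
  assumes H: "heap h" and SH: "sub_heap h P" and eP: "e \<in> P"
begin

lemma hA: "h a b (h c d f) = h (h a b c) d f" using H by (simp add: heap_def)
lemma hM1[simp]: "h a a b = b" using H by (simp add: heap_def)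
lemma hM2[simp]: "h b a a = b" using H by (simp add: heap_def)

lemma hP: "h a (h d c b) f = h (h a b c) d f"
proof -
  have d: "h (h d c b) b c = d" by (simp add: hA[symmetric])
  have "h a (h d c b) f = h a (h d c b) (h (h (h d c b) b c) d f)" using d by simp
  also have "\<dots> = h (h a (h d c b) (h (h d c b) b c)) d f" by (rule hA)
  also have "h a (h d c b) (h (h d c b) b c) = h a b c" by (simp add: hA)
  finally show ?thesis .
qed

lemma inP: "x \<in> P \<Longrightarrow> y \<in> P \<Longrightarrow> z \<in> P \<Longrightarrow> h x y z \<in> P"
  using SH by (simp add: sub_heap_def)

lemma sim_iff: "sim h P a b \<longleftrightarrow> h a b e \<in> P"
proof
  assume "sim h P a b"
  then obtain s where s: "s \<in> P" "h a b s \<in> P" by (auto simp: sim_def)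
  have "h a b e = h (h a b s) s e" by (simp add: hA[symmetric])
  then show "h a b e \<in> P" using s eP inP by simp
next
  assume "h a b e \<in> P" then show "sim h P a b" using eP by (auto simp: sim_def)
qed

lemma cls: "sim_class h P a = {b. h a b e \<in> P}"
  by (simp add: sim_class_def sim_iff)

lemma Rsym: "h a b e \<in> P \<Longrightarrow> h b a e \<in> P"
proof -
  assume "h a b e \<in> P"
  moreover have "h e (h a b e) e = h b a e" by (simp add: hP)
  ultimately show ?thesis using inP eP by metis
qed

lemma Rtrans: "h a b e \<in> P \<Longrightarrow> h b c e \<in> P \<Longrightarrow> h a c e \<in> P"
proof -
  assume "h a b e \<in> P" "h b c e \<in> P"
  moreover have "h (h a b e) e (h b c e) = h a c e"
    by (metis hA hM1 hM2)
  ultimately show ?thesis using inP eP by metis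
qed

lemma classP: "sim_class h P e = P"
proof -
  have "h e b e \<in> P \<longleftrightarrow> b \<in> P" for b
  proof
    assume "h e b e \<in> P"
    moreover have "h e (h e b e) e = b" by (simp add: hP)
    ultimately show "b \<in> P" using inP eP by metis
  qed (use inP eP in auto)
  then show ?thesis by (auto simp: cls)
qed

lemma class_sub: "sub_heap h (sim_class h P a)"
proof -
  have "h a (h b c d) e \<in> P" if "h a b e \<in> P" "h a c e \<in> P" "h a d e \<in> P" for b c d
  proof -
    have "h (h a d e) (h a c e) (h a b e) = h a (h b c d) e"
    proof -
      have 1: "h e (h a c e) (h a b e) = h c b e" by (simp add: hP hA)
      have "h (h a d e) (h a c e) (h a b e) = h a d (h e (h a c e) (h a b e))" by (simp add: hA)
      also have "\<dots> = h a d (h c b e)" by (simp add: 1)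
      also have "\<dots> = h a (h b c d) e" by (simp add: hA hP)
      finally show ?thesis .
    qed
    then show ?thesis using that inP by metis
  qed
  then show ?thesis by (auto simp: sub_heap_def cls)
qed

lemma lc_class:
  assumes LD: "\<forall>a b c d. m a (h b c d) = h (m a b) (m a c) (m a d)"
    and LC: "left_closed h m P"
  shows "left_closed h m (sim_class h P a)"
  unfolding left_closed_def cls
proof (intro ballI allI, simp)
  fix s s' t assume as: "h a s e \<in> P" "h a s' e \<in> P"
  define q where "q = h s' s e"
  have qP: "q \<in> P" unfolding q_def using Rtrans[OF Rsym[OF as(2)] as(1)] .
  have s': "s' = h q e s" by (simp add: q_def hA[symmetric])
  have "m t s' = h (m t q) (m t e) (m t s)" using LD s' by simp
  then have "h (h (m t s') (m t s) s) s e = h (m t q) (m t e) e"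
    by (simp add: hA[symmetric])
  also have "\<dots> \<in> P" using LC qP eP by (simp add: left_closed_def)
  finally show "h a (h (m t s') (m t s) s) e \<in> P"
    using Rtrans[OF as(1) Rsym] by blast
qed

lemma rc_class:
  assumes RD: "\<forall>a b c d. m (h b c d) a = h (m b a) (m c a) (m d a)"
    and RC: "right_closed h m P"
  shows "right_closed h m (sim_class h P a)"
  unfolding right_closed_def cls
proof (intro ballI allI, simp)
  fix s s' t assume as: "h a s e \<in> P" "h a s' e \<in> P"
  define q where "q = h s' s e"
  have qP: "q \<in> P" unfolding q_def using Rtrans[OF Rsym[OF as(2)] as(1)] .
  have s': "s' = h q e s" by (simp add: q_def hA[symmetric])
  have "m s' t = h (m q t) (m e t) (m s t)" using RD s' by simp
  then have "h (h (m s' t) (m s t) s) s e = h (m q t) (m e t) e"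
    by (simp add: hA[symmetric])
  also have "\<dots> \<in> P" using RC qP eP by (simp add: right_closed_def)
  finally show "h a (h (m s' t) (m s t) s) e \<in> P"
    using Rtrans[OF as(1) Rsym] by blast
qed

end

theorem corollary3p12:
  fixes h :: "'a \<Rightarrow> 'a \<Rightarrow> 'a \<Rightarrow> 'a" and m :: "'a \<Rightarrow> 'a \<Rightarrow> 'a" and P :: "'a set"
  assumes "near_truss h m" and "normal_sub_heap h P"
  shows "(paragon h m P \<longleftrightarrow>
            left_closed h m P \<and> (\<forall>a. right_closed h m (sim_class h P a))) \<and>
         (skew_truss h m \<longrightarrow> (paragon h m P \<longleftrightarrow> closed_sub h m P))"
proof -
  have H: "heap h" and LD: "\<forall>a b c d. m a (h b c d) = h (m a b) (m a c) (m a d)"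
    using assms(1) by (auto simp: near_truss_def pre_truss_def)
  have SH: "sub_heap h P" using assms(2) by (simp add: normal_sub_heap_def)
  obtain e where eP: "e \<in> P" using assms(2) by (auto simp: normal_sub_heap_def)
  note cP = classP[OF H SH eP]
  have A: "paragon h m P \<longleftrightarrow> left_closed h m P \<and> (\<forall>a. right_closed h m (sim_class h P a))"
  proof
    assume p: "paragon h m P"
    then have "closed_sub h m (sim_class h P e)" by (simp add: paragon_def)
    then have "left_closed h m P" by (simp add: cP closed_sub_def)
    with p show "left_closed h m P \<and> (\<forall>a. right_closed h m (sim_class h P a))"
      by (simp add: paragon_def closed_sub_def)
  next
    assume "left_closed h m P \<and> (\<forall>a. right_closed h m (sim_class h P a))"
    then show "paragon h m P"
      using assms(2) class_sub[OF H SH eP] lc_class[OF H SH eP LD]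
      by (simp add: paragon_def closed_sub_def)
  qed
  have B: "paragon h m P \<longleftrightarrow> closed_sub h m P" if sk: "skew_truss h m"
  proof
    assume "paragon h m P"
    then have "closed_sub h m (sim_class h P e)" by (simp add: paragon_def)
    then show "closed_sub h m P" by (simp add: cP)
  next
    assume c: "closed_sub h m P"
    have RD: "\<forall>a b c d. m (h b c d) a = h (m b a) (m c a) (m d a)"
      using sk by (simp add: skew_truss_def)
    show "paragon h m P" unfolding A
      using c rc_class[OF H SH eP RD] by (simp add: closed_sub_def)
  qed
  show ?thesis using A B by blast
qed

end
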